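(* Fix $m\in P\cap\mathbb Z^n$ and $s_0<-s^{cvx}$, and let $\phi(x):=(x-m)\cdot\frac{\partial\psi}{\partial x}(x)-\psi(x)$. Then for each $s<s_0$ and each compact set $K$ contained in a negative-definite island of $g_s$: (1) $|\sigma^m_s|(x,\theta)=e^{(m-x)\cdot y_0+g_0}\,e^{|s|\phi(x)}$ for $x\in K$, $\theta\in\mathbb T^n$; (2) the restriction of $\phi$ to $K$ achieves its maximum on $\partial K$.
   Context: Let $P=\{x\in\mathbb R^n:\ell_j(x)=\langle\nu_j,x\rangle+\lambda_j\ge0\}$ be a Delzant polytope with interior $\check P$, $(X_P,\omega)$ the associated compact symplectic toric manifold with action-angle coordinates $(x,\theta)$ on $\check X_P\cong\check P\times\mathbb T^n$. $L$ is a Hermitian prequantum line bundle with unitary trivialization $\mathbbm1$ over $\check X_P$. Let $g_P=\frac12\sum\ell_j\log\ell_j$, $\psi\in C^\infty(P)$ strongly convex (positive definite Hessian on $P$), $g_s=g_P+s\psi$ with Hessian $H_s$ and $y_s=\partial g_s/\partial x$ (so $g_0=g_P$, $y_0=\partial g_P/\partial x$). $\sigma^m_s=e^{m\cdot(y_s+i\theta)}e^{-(x\cdot y_s-g_s)}\mathbbm1$ on $\check X_P$. A negative-definite island of $g_s$ is a connected component of $\{x\in\check P:H_s(x)\text{ negative definite}\}$; $s^{cvx}\ge0$ is the smallest number such that $g_s$ is convex on $\check P$ for all $s>-s^{cvx}$. *)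

theory Defs
  imports "HOL-Analysis.Analysis"
begin

definition grad :: "(real^'n \<Rightarrow> real) \<Rightarrow> real^'n \<Rightarrow> real^'n" where
  "grad f x = (\<chi> i. frechet_derivative f (at x) (axis i 1))"

definition hess :: "(real^'n \<Rightarrow> real) \<Rightarrow> real^'n \<Rightarrow> real^'n^'n" where
  "hess f x = (\<chi> i j. frechet_derivative (\<lambda>z. grad f z $ i) (at x) (axis j 1))"

fun Ck_on :: "nat \<Rightarrow> (real^'n) set \<Rightarrow> (real^'n \<Rightarrow> real) \<Rightarrow> bool" where
  "Ck_on 0 U f = continuous_on U f"
| "Ck_on (Suc k) U f = ((\<forall>x\<in>U. f differentiable (at x)) \<and>
      (\<forall>i. Ck_on k U (\<lambda>x. frechet_derivative f (at x) (axis i 1))))"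

definition smooth_on :: "(real^'n) set \<Rightarrow> (real^'n \<Rightarrow> real) \<Rightarrow> bool" where
  "smooth_on U f \<longleftrightarrow> (\<forall>k. Ck_on k U f)"

definition posdef :: "real^'n^'n \<Rightarrow> bool" where
  "posdef H \<longleftrightarrow> (\<forall>v. v \<noteq> 0 \<longrightarrow> v \<bullet> (H *v v) > 0)"

definition negdef :: "real^'n^'n \<Rightarrow> bool" where
  "negdef H \<longleftrightarrow> (\<forall>v. v \<noteq> 0 \<longrightarrow> v \<bullet> (H *v v) < 0)"

definition ell :: "('j \<Rightarrow> real^'n) \<Rightarrow> ('j \<Rightarrow> real) \<Rightarrow> 'j \<Rightarrow> real^'n \<Rightarrow> real" where
  "ell nu lam j x = nu j \<bullet> x + lam j"

definition polyP :: "('j \<Rightarrow> real^'n) \<Rightarrow> ('j \<Rightarrow> real) \<Rightarrow> (real^'n) set" where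
  "polyP nu lam = {x. \<forall>j. ell nu lam j x \<ge> 0}"

definition lattice_pt :: "real^'n \<Rightarrow> bool" where
  "lattice_pt z \<longleftrightarrow> (\<forall>i. z $ i \<in> \<int>)"

definition primitive_vec :: "real^'n \<Rightarrow> bool" where
  "primitive_vec v \<longleftrightarrow> lattice_pt v \<and> (\<forall>k::int. k > 1 \<longrightarrow> \<not> lattice_pt (v /\<^sub>R of_int k))"

text \<open>Delzant polytope in the (minimal) presentation P = {x. l_j(x) >= 0}: compact, full-dimensional,
  the nu_j are primitive integral vectors, each l_j = 0 cuts out a facet, distinct j give distinct
  facets, and at every vertex exactly n facets meet whose normals form a Z-basis of Z^n.\<close>
definition delzant :: "('j::finite \<Rightarrow> real^'n) \<Rightarrow> ('j \<Rightarrow> real) \<Rightarrow> bool" where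
  "delzant nu lam \<longleftrightarrow>
     bounded (polyP nu lam) \<and> interior (polyP nu lam) \<noteq> {} \<and>
     (\<forall>j. primitive_vec (nu j)) \<and>
     (\<forall>j. {x \<in> polyP nu lam. ell nu lam j x = 0} facet_of polyP nu lam) \<and>
     inj (\<lambda>j. {x \<in> polyP nu lam. ell nu lam j x = 0}) \<and>
     (\<forall>v. v extreme_point_of polyP nu lam \<longrightarrow>
        card {j. ell nu lam j v = 0} = CARD('n) \<and>
        (\<forall>z. lattice_pt z \<longrightarrow>
           (\<exists>!c::'j \<Rightarrow> int. (\<forall>j. ell nu lam j v \<noteq> 0 \<longrightarrow> c j = 0) \<and>
               z = (\<Sum>j\<in>{j. ell nu lam j v = 0}. of_int (c j) *\<^sub>R nu j))))"

definition gP :: "('j::finite \<Rightarrow> real^'n) \<Rightarrow> ('j \<Rightarrow> real) \<Rightarrow> real^'n \<Rightarrow> real" where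
  "gP nu lam x = (1/2) * (\<Sum>j\<in>UNIV. ell nu lam j x * ln (ell nu lam j x))"

definition gs :: "('j::finite \<Rightarrow> real^'n) \<Rightarrow> ('j \<Rightarrow> real) \<Rightarrow> (real^'n \<Rightarrow> real) \<Rightarrow> real \<Rightarrow> real^'n \<Rightarrow> real" where
  "gs nu lam psi s x = gP nu lam x + s * psi x"

text \<open>Coefficient of sigma^m_s with respect to the unitary trivialization 1 on P-interior x T^n;
  theta is a real vector of angles (the expression is 2pi-periodic in each theta_i).\<close>
definition sigma :: "('j::finite \<Rightarrow> real^'n) \<Rightarrow> ('j \<Rightarrow> real) \<Rightarrow> (real^'n \<Rightarrow> real) \<Rightarrow> real^'n \<Rightarrow> real
     \<Rightarrow> real^'n \<Rightarrow> real^'n \<Rightarrow> complex" where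
  "sigma nu lam psi m s x \<theta> =
     (let y = grad (gs nu lam psi s) x in
       exp (\<Sum>i\<in>UNIV. complex_of_real (m $ i) * (complex_of_real (y $ i) + \<i> * complex_of_real (\<theta> $ i)))
       * complex_of_real (exp (- (x \<bullet> y - gs nu lam psi s x))))"

definition is_island :: "('j::finite \<Rightarrow> real^'n) \<Rightarrow> ('j \<Rightarrow> real) \<Rightarrow> (real^'n \<Rightarrow> real) \<Rightarrow> real
     \<Rightarrow> (real^'n) set \<Rightarrow> bool" where
  "is_island nu lam psi s I \<longleftrightarrow>
     (let N = {x \<in> interior (polyP nu lam). negdef (hess (gs nu lam psi s) x)} in
       \<exists>x0\<in>N. I = connected_component_set N x0)"

definition s_cvx :: "('j::finite \<Rightarrow> real^'n) \<Rightarrow> ('j \<Rightarrow> real) \<Rightarrow> (real^'n \<Rightarrow> real) \<Rightarrow> real" where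
  "s_cvx nu lam psi = Sup {c. c \<ge> 0 \<and> (\<forall>s. s > - c \<longrightarrow> convex_on (interior (polyP nu lam)) (gs nu lam psi s))}"

definition phi :: "(real^'n \<Rightarrow> real) \<Rightarrow> real^'n \<Rightarrow> real^'n \<Rightarrow> real" where
  "phi psi m x = (x - m) \<bullet> grad psi x - psi x"

end

theory Submission imports Defs begin

lemma grad_inner:
  assumes "f differentiable (at x)"
  shows "v \<bullet> grad f x = frechet_derivative f (at x) v"
proof -
  have lin: "linear (frechet_derivative f (at x))"
    using assms frechet_derivative_works has_derivative_linear by blast
  have "frechet_derivative f (at x) v = frechet_derivative f (at x) (\<Sum>i\<in>UNIV. (v$i) *\<^sub>R axis i 1)"
    using basis_expansion[of v] by (simp add: scalar_mult_eq_scaleR)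
  also have "\<dots> = (\<Sum>i\<in>UNIV. (v$i) * frechet_derivative f (at x) (axis i 1))"
    using lin by (simp add: linear_sum linear_scale)
  also have "\<dots> = v \<bullet> grad f x"
    by (simp add: grad_def inner_vec_def)
  finally show ?thesis by simp
qed

lemma line_deriv:
  assumes "f differentiable (at (a + t *\<^sub>R v))"
  shows "((\<lambda>t. f (a + t *\<^sub>R v)) has_real_derivative (v \<bullet> grad f (a + t *\<^sub>R v))) (at t)"
proof -
  have d: "(f has_derivative frechet_derivative f (at (a + t *\<^sub>R v))) (at (a + t *\<^sub>R v))"
    using assms frechet_derivative_works by blast
  have l: "((\<lambda>t. a + t *\<^sub>R v) has_derivative (\<lambda>h. h *\<^sub>R v)) (at t)"
    by (auto intro!: derivative_eq_intros)
  have "((\<lambda>t. f (a + t *\<^sub>R v)) has_derivative (\<lambda>h. frechet_derivative f (at (a + t *\<^sub>R v)) (h *\<^sub>R v))) (at t)"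
    using has_derivative_compose[OF l d] by (simp add: o_def)
  moreover have "(\<lambda>h. frechet_derivative f (at (a + t *\<^sub>R v)) (h *\<^sub>R v)) = (\<lambda>h. (v \<bullet> grad f (a + t *\<^sub>R v)) * h)"
    using grad_inner[OF assms] d has_derivative_linear linear_scale by (fastforce simp: linear_cmul)
  ultimately show ?thesis by (simp add: has_field_derivative_def)
qed

lemma quad_deriv:
  assumes "\<And>i. (\<lambda>z. grad f z $ i) differentiable (at (a + t *\<^sub>R v))"
  shows "((\<lambda>t. v \<bullet> grad f (a + t *\<^sub>R v)) has_real_derivative (v \<bullet> (hess f (a + t *\<^sub>R v) *v v))) (at t)"
proof -
  let ?x = "a + t *\<^sub>R v"
  have e: "v \<bullet> grad (\<lambda>z. grad f z $ i) ?x = (hess f ?x *v v) $ i" for i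
    unfolding inner_vec_def matrix_vector_mult_def hess_def
    by (simp add: grad_def[of "\<lambda>z. grad f z $ i"] mult.commute)
  have "((\<lambda>t. \<Sum>i\<in>UNIV. v$i * grad f (a + t *\<^sub>R v) $ i) has_real_derivative (\<Sum>i\<in>UNIV. v$i * (hess f ?x *v v) $ i)) (at t)"
  proof (rule DERIV_sum, rule DERIV_cmult)
    fix i
    have "((\<lambda>t. grad f (a + t *\<^sub>R v) $ i) has_real_derivative v \<bullet> grad (\<lambda>z. grad f z $ i) ?x) (at t)"
      by (rule line_deriv[OF assms])
    then show "((\<lambda>t. grad f (a + t *\<^sub>R v) $ i) has_real_derivative (hess f ?x *v v) $ i) (at t)"
      unfolding e .
  qed
  moreover have "(\<lambda>t. \<Sum>i\<in>UNIV. v$i * grad f (a + t *\<^sub>R v) $ i) = (\<lambda>t. v \<bullet> grad f (a + t *\<^sub>R v))"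
    by (simp add: inner_vec_def)
  moreover have "(\<Sum>i\<in>UNIV. v$i * (hess f ?x *v v) $ i) = v \<bullet> (hess f ?x *v v)"
    by (simp add: inner_vec_def)
  ultimately show ?thesis by metis
qed

lemma phi_deriv:
  assumes "psi differentiable (at (m + t *\<^sub>R v))"
    and "\<And>i. (\<lambda>z. grad psi z $ i) differentiable (at (m + t *\<^sub>R v))"
  shows "((\<lambda>t. phi psi m (m + t *\<^sub>R v)) has_real_derivative (t * (v \<bullet> (hess psi (m + t *\<^sub>R v) *v v)))) (at t)"
proof -
  have eq: "(\<lambda>t. phi psi m (m + t *\<^sub>R v)) = (\<lambda>t. t * (v \<bullet> grad psi (m + t *\<^sub>R v)) - psi (m + t *\<^sub>R v))"
    by (simp add: phi_def)
  have "((\<lambda>t. t * (v \<bullet> grad psi (m + t *\<^sub>R v)) - psi (m + t *\<^sub>R v)) has_real_derivative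
     (1 * (v \<bullet> grad psi (m + t *\<^sub>R v)) + (v \<bullet> (hess psi (m + t *\<^sub>R v) *v v)) * t - v \<bullet> grad psi (m + t *\<^sub>R v))) (at t)"
    by (intro DERIV_diff DERIV_mult DERIV_ident quad_deriv line_deriv assms)
  then show ?thesis unfolding eq by (simp add: algebra_simps)
qed

lemma max_frontier:
  fixes psi :: "real^'n \<Rightarrow> real" and K S U :: "(real^'n) set"
  assumes K: "compact K" "K \<noteq> {}" "K \<subseteq> S" and U: "open U" "S \<subseteq> U"
    and d1: "\<And>z. z \<in> U \<Longrightarrow> psi differentiable (at z)"
    and d2: "\<And>z i. z \<in> U \<Longrightarrow> (\<lambda>z. grad psi z $ i) differentiable (at z)"
    and pd: "\<And>x. x \<in> S \<Longrightarrow> posdef (hess psi x)"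
  shows "\<exists>x\<in>frontier K. \<forall>z\<in>K. phi psi m z \<le> phi psi m x"
proof -
  have cg: "continuous_on U (grad psi)"
  proof -
    have "continuous_on U (\<lambda>z. \<chi> i. grad psi z $ i)"
      by (intro continuous_on_vec_lambda differentiable_imp_continuous_on)
         (simp add: differentiable_on_def d2 differentiable_at_withinI)
    then show ?thesis by simp
  qed
  have cp: "continuous_on U psi"
    by (intro differentiable_imp_continuous_on) (simp add: differentiable_on_def d1 differentiable_at_withinI)
  have "continuous_on U (phi psi m)"
    unfolding phi_def by (intro continuous_intros cg cp)
  then have "continuous_on K (phi psi m)"
    using K U continuous_on_subset by blast
  then obtain x0 where x0: "x0 \<in> K" "\<And>y. y \<in> K \<Longrightarrow> phi psi m y \<le> phi psi m x0"
    using continuous_attains_sup[OF K(1) K(2)] by blast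
  show ?thesis
  proof (cases "x0 \<in> frontier K")
    case True then show ?thesis using x0 by blast
  next
    case False
    then have "x0 \<in> interior K" using x0 compact_imp_closed[OF K(1)]
      by (simp add: frontier_def closure_closed)
    then obtain r where r: "r > 0" "ball x0 r \<subseteq> K"
      using mem_interior by blast
    obtain i0 :: 'n where True by blast
    define v where "v = (if x0 = m then axis i0 1 else x0 - m)"
    define t0 :: real where "t0 = (if x0 = m then 0 else 1)"
    have v0: "v \<noteq> 0" by (simp add: v_def axis_eq_0_iff)
    have x0e: "x0 = m + t0 *\<^sub>R v" by (simp add: v_def t0_def)
    have t0: "t0 \<ge> 0" by (simp add: t0_def)
    define e where "e = r / (2 * norm v)"
    have e: "e > 0" using r v0 by (simp add: e_def)
    have inK: "m + t *\<^sub>R v \<in> K" if "t0 \<le> t" "t \<le> t0 + e" for t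
    proof -
      have "m + t *\<^sub>R v = x0 + (t - t0) *\<^sub>R v" by (simp add: x0e algebra_simps)
      moreover have "norm ((t - t0) *\<^sub>R v) \<le> e * norm v"
        using that by (simp add: mult_right_mono)
      moreover have "e * norm v < r" using r v0 by (simp add: e_def)
      ultimately have "m + t *\<^sub>R v \<in> ball x0 r" by (simp add: dist_norm)
      then show ?thesis using r by blast
    qed
    have der: "DERIV (\<lambda>t. phi psi m (m + t *\<^sub>R v)) t :> t * (v \<bullet> (hess psi (m + t *\<^sub>R v) *v v))"
      if "t0 \<le> t" "t \<le> t0 + e" for t
      using inK[OF that] K U by (intro phi_deriv d1 d2) auto
    obtain z where z: "t0 < z" "z < t0 + e"
      "phi psi m (m + (t0 + e) *\<^sub>R v) - phi psi m (m + t0 *\<^sub>R v) = (t0 + e - t0) * (z * (v \<bullet> (hess psi (m + z *\<^sub>R v) *v v)))"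
      using MVT2[of t0 "t0 + e", OF _ der] e by auto
    have "v \<bullet> (hess psi (m + z *\<^sub>R v) *v v) > 0"
      using pd[of "m + z *\<^sub>R v"] inK[of z] z K v0 by (auto simp: posdef_def)
    then have "e * (z * (v \<bullet> (hess psi (m + z *\<^sub>R v) *v v))) > 0"
      using z t0 e by (simp add: mult_pos_pos)
    then have "phi psi m (m + (t0 + e) *\<^sub>R v) > phi psi m x0"
      using z(3) x0e by simp
    moreover have "m + (t0 + e) *\<^sub>R v \<in> K" using inK e by simp
    ultimately show ?thesis using x0 by fastforce
  qed
qed


lemma ell_deriv: "(ell nu lam j has_derivative (\<lambda>w. nu j \<bullet> w)) (at x)"
  unfolding ell_def by (auto intro!: derivative_eq_intros)

lemma gP_deriv:
  fixes nu :: "'j::finite \<Rightarrow> real^'n"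
  assumes "\<And>j. ell nu lam j x > 0"
  shows "(gP nu lam has_derivative (\<lambda>w. (1/2) * (\<Sum>j\<in>UNIV. (nu j \<bullet> w) * (ln (ell nu lam j x) + 1)))) (at x)"
proof -
  have "((\<lambda>x. ell nu lam j x * ln (ell nu lam j x)) has_derivative (\<lambda>w. (nu j \<bullet> w) * (ln (ell nu lam j x) + 1))) (at x)" for j
  proof -
    have "((\<lambda>x. ell nu lam j x * ln (ell nu lam j x)) has_derivative
       (\<lambda>w. ell nu lam j x * ((nu j \<bullet> w) / ell nu lam j x) + (nu j \<bullet> w) * ln (ell nu lam j x))) (at x)"
      using assms[of j] by (auto intro!: derivative_eq_intros ell_deriv)
    moreover have "(\<lambda>w. ell nu lam j x * ((nu j \<bullet> w) / ell nu lam j x) + (nu j \<bullet> w) * ln (ell nu lam j x))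
        = (\<lambda>w. (nu j \<bullet> w) * (ln (ell nu lam j x) + 1))"
      using assms[of j] by (auto simp: field_simps)
    ultimately show ?thesis by simp
  qed
  then have "((\<lambda>x. (1/2) * (\<Sum>j\<in>UNIV. ell nu lam j x * ln (ell nu lam j x))) has_derivative
     (\<lambda>w. (1/2) * (\<Sum>j\<in>UNIV. (nu j \<bullet> w) * (ln (ell nu lam j x) + 1)))) (at x)"
    by (intro has_derivative_mult_right has_derivative_sum) auto
  then show ?thesis unfolding gP_def[abs_def] .
qed

lemma ln_ell_deriv:
  assumes "ell nu lam j x > 0"
  shows "((\<lambda>z. ln (ell nu lam j z)) has_derivative (\<lambda>w. (nu j \<bullet> w) / ell nu lam j x)) (at x)"
  using assms by (auto intro!: derivative_eq_intros ell_deriv simp: divide_inverse)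

lemma quad_form:
  assumes "\<And>i. (\<lambda>z. grad f z $ i) differentiable (at x)"
  shows "v \<bullet> (hess f x *v v) = (\<Sum>i\<in>UNIV. v$i * frechet_derivative (\<lambda>z. grad f z $ i) (at x) v)"
proof -
  have e: "(hess f x *v v) $ i = frechet_derivative (\<lambda>z. grad f z $ i) (at x) v" for i
    using grad_inner[OF assms[of i], of v]
    by (simp add: inner_vec_def grad_def hess_def matrix_vector_mult_def mult.commute)
  show ?thesis by (simp add: inner_vec_def e)
qed

lemma gs_deriv:
  fixes nu :: "'j::finite \<Rightarrow> real^'n"
  assumes "\<And>j. ell nu lam j x > 0" and "psi differentiable (at x)"
  shows "(gs nu lam psi s has_derivative (\<lambda>w. (1/2) * (\<Sum>j\<in>UNIV. (nu j \<bullet> w) * (ln (ell nu lam j x) + 1))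
            + s * frechet_derivative psi (at x) w)) (at x)"
proof -
  have "((\<lambda>x. gP nu lam x + s * psi x) has_derivative (\<lambda>w. (1/2) * (\<Sum>j\<in>UNIV. (nu j \<bullet> w) * (ln (ell nu lam j x) + 1))
            + s * frechet_derivative psi (at x) w)) (at x)"
    using assms frechet_derivative_works
    by (intro has_derivative_add gP_deriv has_derivative_mult_right) auto
  then show ?thesis unfolding gs_def[abs_def] .
qed

lemma grad_gs:
  fixes nu :: "'j::finite \<Rightarrow> real^'n"
  assumes "\<And>j. ell nu lam j x > 0" and "psi differentiable (at x)"
  shows "grad (gs nu lam psi s) x $ i = (1/2) * (\<Sum>j\<in>UNIV. (nu j $ i) * (ln (ell nu lam j x) + 1)) + s * grad psi x $ i"
  unfolding grad_def using frechet_derivative_at[OF gs_deriv[OF assms, of s], symmetric]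
  by (simp add: inner_axis)

lemma hess_gs_quad:
  fixes nu :: "'j::finite \<Rightarrow> real^'n"
  assumes x0: "x0 \<in> interior (polyP nu lam)"
    and pos: "\<And>z j. z \<in> interior (polyP nu lam) \<Longrightarrow> ell nu lam j z > 0"
    and d1: "\<And>z. z \<in> interior (polyP nu lam) \<Longrightarrow> psi differentiable (at z)"
    and d2: "\<And>i. (\<lambda>z. grad psi z $ i) differentiable (at x0)"
  shows "v \<bullet> (hess (gs nu lam psi s) x0 *v v) =
     (1/2) * (\<Sum>j\<in>UNIV. (nu j \<bullet> v) * (nu j \<bullet> v) / ell nu lam j x0) + s * (v \<bullet> (hess psi x0 *v v))"
proof -
  define D where "D i = (\<lambda>w. (1/2) * (\<Sum>j\<in>UNIV. nu j $ i * ((nu j \<bullet> w) / ell nu lam j x0))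
      + s * frechet_derivative (\<lambda>z. grad psi z $ i) (at x0) w)" for i
  have hd: "((\<lambda>z. grad (gs nu lam psi s) z $ i) has_derivative D i) (at x0)" for i
  proof -
    have "((\<lambda>z. (1/2) * (\<Sum>j\<in>UNIV. (nu j $ i) * (ln (ell nu lam j z) + 1)) + s * grad psi z $ i) has_derivative D i) (at x0)"
      unfolding D_def using d2[of i] frechet_derivative_works pos[OF x0]
      by (intro has_derivative_add has_derivative_mult_right has_derivative_sum
          has_derivative_add_const ln_ell_deriv) auto
    then show ?thesis
      by (rule has_derivative_transform_within_open[OF _ open_interior x0])
         (simp add: grad_gs pos d1)
  qed
  have dd: "(\<lambda>z. grad (gs nu lam psi s) z $ i) differentiable (at x0)" for i
    using hd differentiable_def by blast
  have fd: "frechet_derivative (\<lambda>z. grad (gs nu lam psi s) z $ i) (at x0) = D i" for i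
    using frechet_derivative_at[OF hd] by simp
  have "v \<bullet> (hess (gs nu lam psi s) x0 *v v) = (\<Sum>i\<in>UNIV. v$i * D i v)"
    by (simp add: quad_form[OF dd] fd)
  also have "\<dots> = (1/2) * (\<Sum>i\<in>UNIV. \<Sum>j\<in>UNIV. v$i * nu j $ i * ((nu j \<bullet> v) / ell nu lam j x0))
      + s * (\<Sum>i\<in>UNIV. v$i * frechet_derivative (\<lambda>z. grad psi z $ i) (at x0) v)"
    by (simp add: D_def algebra_simps sum.distrib sum_distrib_left)
  also have "(\<Sum>i\<in>UNIV. \<Sum>j\<in>UNIV. v$i * nu j $ i * ((nu j \<bullet> v) / ell nu lam j x0))
     = (\<Sum>j\<in>UNIV. (nu j \<bullet> v) * (nu j \<bullet> v) / ell nu lam j x0)"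
  proof (subst sum.swap, intro sum.cong refl)
    fix j
    have "(\<Sum>i\<in>UNIV. v$i * nu j $ i * ((nu j \<bullet> v) / ell nu lam j x0))
        = (\<Sum>i\<in>UNIV. v$i * nu j $ i) * ((nu j \<bullet> v) / ell nu lam j x0)"
      by (simp only: sum_distrib_right)
    also have "(\<Sum>i\<in>UNIV. v$i * nu j $ i) = nu j \<bullet> v"
      by (simp add: inner_vec_def mult.commute)
    finally show "(\<Sum>i\<in>UNIV. v$i * nu j $ i * ((nu j \<bullet> v) / ell nu lam j x0))
        = (nu j \<bullet> v) * (nu j \<bullet> v) / ell nu lam j x0" by simp
  qed
  also have "(\<Sum>i\<in>UNIV. v$i * frechet_derivative (\<lambda>z. grad psi z $ i) (at x0) v) = v \<bullet> (hess psi x0 *v v)"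
    by (simp add: quad_form[OF d2])
  finally show ?thesis .
qed


lemma ell_pos:
  assumes "nu j \<noteq> 0" "x \<in> interior (polyP nu lam)"
  shows "ell nu lam j x > 0"
proof -
  obtain r where r: "r > 0" "ball x r \<subseteq> polyP nu lam" using assms(2) mem_interior by blast
  define y where "y = x - (r / (2 * norm (nu j))) *\<^sub>R nu j"
  have "dist x y < r" using r assms(1) by (simp add: y_def dist_norm)
  then have "y \<in> polyP nu lam" using r by auto
  then have "ell nu lam j y \<ge> 0" by (simp add: polyP_def)
  moreover have "ell nu lam j y = ell nu lam j x - (r / (2 * norm (nu j))) * (nu j \<bullet> nu j)"
    by (simp add: y_def ell_def inner_diff_right algebra_simps)
  moreover have "(r / (2 * norm (nu j))) * (nu j \<bullet> nu j) > 0"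
    using r assms(1) by (simp add: mult_pos_pos)
  ultimately show ?thesis by linarith
qed

lemma primitive_nz: "primitive_vec v \<Longrightarrow> v \<noteq> 0"
  unfolding primitive_vec_def by (auto elim!: allE[of _ 2])

lemma sigma_norm:
  "cmod (sigma nu lam psi m s x \<theta>) = exp (m \<bullet> grad (gs nu lam psi s) x - (x \<bullet> grad (gs nu lam psi s) x - gs nu lam psi s x))"
proof -
  have "Re (\<Sum>i\<in>UNIV. complex_of_real (m $ i) * (complex_of_real (grad (gs nu lam psi s) x $ i) + \<i> * complex_of_real (\<theta> $ i)))
     = m \<bullet> grad (gs nu lam psi s) x"
    by (simp add: inner_vec_def)
  then show ?thesis
    by (simp add: sigma_def Let_def norm_mult norm_exp_eq_Re exp_add[symmetric] del: exp_add)
qed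


lemma arg_eq:
  fixes m x Y0 gp :: "real^'n"
  assumes "s < 0"
  shows "m \<bullet> (Y0 + s *\<^sub>R gp) - (x \<bullet> (Y0 + s *\<^sub>R gp) - (G0 + s * p))
     = (m - x) \<bullet> Y0 + G0 + \<bar>s\<bar> * ((x - m) \<bullet> gp - p)"
  using assms by (simp add: abs_of_neg inner_add_right inner_diff_left algebra_simps)


theorem mainTheorem13:
  fixes nu :: "'j::finite \<Rightarrow> real^'n" and lam :: "'j \<Rightarrow> real"
    and psi :: "real^'n \<Rightarrow> real" and m :: "real^'n" and s0 :: real
  assumes "delzant nu lam"
    and "\<exists>U. open U \<and> polyP nu lam \<subseteq> U \<and> smooth_on U psi"
    and "\<forall>x\<in>polyP nu lam. posdef (hess psi x)"
    and "m \<in> polyP nu lam" and "lattice_pt m"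
    and "s0 < - s_cvx nu lam psi"
  shows "\<forall>s<s0. \<forall>K I. compact K \<and> is_island nu lam psi s I \<and> K \<subseteq> I \<longrightarrow>
           (\<forall>x\<in>K. \<forall>\<theta>. cmod (sigma nu lam psi m s x \<theta>)
               = exp ((m - x) \<bullet> grad (gs nu lam psi 0) x + gs nu lam psi 0 x) * exp (\<bar>s\<bar> * phi psi m x))
         \<and> (K \<noteq> {} \<longrightarrow> (\<exists>x\<in>frontier K. \<forall>z\<in>K. phi psi m z \<le> phi psi m x))"
proof (intro allI impI)
  fix s K I
  assume "s < s0" and KI: "compact K \<and> is_island nu lam psi s I \<and> K \<subseteq> I"
  obtain U where U: "open U" "polyP nu lam \<subseteq> U" "smooth_on U psi" using assms(2) by blast
  have ck: "Ck_on (Suc (Suc 0)) U psi" using U(3) smooth_on_def by blast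
  have d1: "\<And>z. z \<in> U \<Longrightarrow> psi differentiable (at z)" using ck by simp
  have d2: "\<And>z i. z \<in> U \<Longrightarrow> (\<lambda>z. grad psi z $ i) differentiable (at z)"
    using ck by (simp add: grad_def)
  have pv: "\<forall>j. primitive_vec (nu j)"
    using assms(1) unfolding delzant_def by blast
  have nz: "nu j \<noteq> 0" for j
    using pv primitive_nz by blast
  have pos: "\<And>z j. z \<in> interior (polyP nu lam) \<Longrightarrow> ell nu lam j z > 0"
    using ell_pos nz by metis
  have intU: "z \<in> U" if "z \<in> interior (polyP nu lam)" for z
    using that interior_subset U(2) by blast
  define N where "N = {x \<in> interior (polyP nu lam). negdef (hess (gs nu lam psi s) x)}"
  have isl: "is_island nu lam psi s I" using KI by blast
  have "\<exists>x0\<in>N. I = connected_component_set N x0"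
    using isl unfolding is_island_def Let_def N_def[symmetric] .
  then obtain x0 where x0: "x0 \<in> N" "I = connected_component_set N x0" by blast
  have KN: "K \<subseteq> interior (polyP nu lam)"
    using KI x0 connected_component_subset N_def by blast
  have sneg: "s < 0"
  proof (rule ccontr)
    assume "\<not> s < 0"
    obtain i0 :: 'n where True by blast
    define v :: "real^'n" where "v = axis i0 1"
    have v0: "v \<noteq> 0" by (simp add: v_def axis_eq_0_iff)
    have xi: "x0 \<in> interior (polyP nu lam)" using x0 N_def by blast
    have "v \<bullet> (hess (gs nu lam psi s) x0 *v v) =
       (1/2) * (\<Sum>j\<in>UNIV. (nu j \<bullet> v) * (nu j \<bullet> v) / ell nu lam j x0) + s * (v \<bullet> (hess psi x0 *v v))"
      by (rule hess_gs_quad[OF xi pos]) (auto intro: d1 d2 intU xi)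
    moreover have "(\<Sum>j\<in>UNIV. (nu j \<bullet> v) * (nu j \<bullet> v) / ell nu lam j x0) \<ge> 0"
      using pos[OF xi] by (intro sum_nonneg) (simp add: less_imp_le)
    moreover have "v \<bullet> (hess psi x0 *v v) > 0"
      using assms(3) xi interior_subset v0 by (auto simp: posdef_def)
    moreover have "v \<bullet> (hess (gs nu lam psi s) x0 *v v) < 0"
      using x0 v0 by (auto simp: N_def negdef_def)
    moreover have "s * (v \<bullet> (hess psi x0 *v v)) \<ge> 0"
      using \<open>\<not> s < 0\<close> calculation(3) by simp
    ultimately show False by linarith
  qed
  show "(\<forall>x\<in>K. \<forall>\<theta>. cmod (sigma nu lam psi m s x \<theta>)
               = exp ((m - x) \<bullet> grad (gs nu lam psi 0) x + gs nu lam psi 0 x) * exp (\<bar>s\<bar> * phi psi m x))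
         \<and> (K \<noteq> {} \<longrightarrow> (\<exists>x\<in>frontier K. \<forall>z\<in>K. phi psi m z \<le> phi psi m x))"
  proof (intro conjI ballI allI impI)
    fix x \<theta> assume "x \<in> K"
    then have xi: "x \<in> interior (polyP nu lam)" using KN by blast
    have g: "grad (gs nu lam psi s) x = grad (gs nu lam psi 0) x + s *\<^sub>R grad psi x"
      using grad_gs[OF pos[OF xi] d1[OF intU[OF xi]]] by (simp add: vec_eq_iff)
    have gs: "gs nu lam psi s x = gs nu lam psi 0 x + s * psi x" by (simp add: gs_def)
    show "cmod (sigma nu lam psi m s x \<theta>)
               = exp ((m - x) \<bullet> grad (gs nu lam psi 0) x + gs nu lam psi 0 x) * exp (\<bar>s\<bar> * phi psi m x)"
      unfolding sigma_norm g gs exp_add[symmetric] phi_def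
      by (rule arg_cong[where f=exp], rule arg_eq[OF sneg])
  next
    assume "K \<noteq> {}"
    show "\<exists>x\<in>frontier K. \<forall>z\<in>K. phi psi m z \<le> phi psi m x"
    proof (rule max_frontier[OF _ _ _ U(1) U(2) d1 d2])
      show "compact K" using KI by blast
      show "K \<noteq> {}" by fact
      show "K \<subseteq> polyP nu lam" using KN interior_subset by blast
      show "\<And>x. x \<in> polyP nu lam \<Longrightarrow> posdef (hess psi x)" using assms(3) by blast
    qed
  qed
qed

end
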